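(* Let $\mathfrak{A}$ be an atomic weakly associative relation algebra and let $\mathfrak{B}$ be its suitable structure. Then $\mathfrak{Cm}\,\mathfrak{B}$ satisfies the merry-go-round identities MGR$_n$ for all $2\le n<\omega$; in particular, for every $X\subseteq B$ and all $\kappa,\lambda,\mu$ with $\{\kappa,\lambda,\mu\}=\{0,1,2\}$, $$T^*_\kappa(E_{\kappa\lambda}\cap T^*_\lambda(E_{\lambda\mu}\cap T^*_\mu(E_{\mu\kappa}\cap T^*_\kappa X)))=T^*_\kappa(E_{\kappa\mu}\cap T^*_\mu(E_{\mu\lambda}\cap T^*_\lambda(E_{\lambda\kappa}\cap T^*_\kappa X))).$$
   Context: WA: algebras $\langle A,+,\overline{\phantom{x}},;,\breve{\phantom{x}},1'\rangle$ with $x\cdot y=\overline{\overline{x}+\overline{y}}$, $0'=\overline{1'}$, $1=1'+0'$, $0=\overline{1}$, satisfying for all $x,y,z$: $x+y=y+x$; $x+(y+z)=(x+y)+z$; $\overline{\overline{x}+\overline{y}}+\overline{\overline{x}+y}=x$; $((x\cdot 1');1);1=(x\cdot1');1$; $(x+y);z=x;z+y;z$; $x;1'=x$; $\breve{\breve{x}}=x$; $\breve{(x+y)}=\breve{x}+\breve{y}$; $\breve{(x;y)}=\breve{y};\breve{x}$; $\breve{x};\overline{x;y}+\overline{y}=\overline{y}$. Suitable structure: $B=\{s\in{}^3\mathrm{At}(\mathfrak{A}): s_2;s_0\ge s_1\}$; $T_\kappa=\{\langle s,t\rangle\in B\times B:s_\kappa=t_\kappa\}$; $E_{\kappa\kappa}=B$;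 for distinct $\kappa,\lambda$ with third index $\mu$, $E_{\kappa\lambda}=\{s\in B:s_\mu\le1'\}$. $\mathfrak{Cm}\,\mathfrak{B}=\langle\mathcal{P}(B),\cup,\cap,B\setminus\cdot,\emptyset,B,T_\kappa^*,E_{\kappa\lambda}\rangle_{\kappa,\lambda<3}$, $T_\kappa^*(X)=\{y\in B:\exists x\in X\ \langle y,x\rangle\in T_\kappa\}$, with $c_\kappa=T^*_\kappa$, $d_{\kappa\lambda}=E_{\kappa\lambda}$, $\cdot=\cap$. Merry-go-round identities: with $s^\kappa_\lambda x=c_\kappa(d_{\kappa\lambda}\cdot x)$ for $\kappa\ne\lambda$, MGR$_n$ is the set of identities $s^\lambda_{\kappa_1}s^{\kappa_1}_{\kappa_2}\cdots s^{\kappa_{n-1}}_{\kappa_n}s^{\kappa_n}_\lambda c_\lambda x=s^\lambda_{\kappa_n}s^{\kappa_n}_{\kappa_1}s^{\kappa_1}_{\kappa_2}\cdots s^{\kappa_{n-2}}_{\kappa_{n-1}}s^{\kappa_{n-1}}_\lambda c_\lambda x$ for distinct $\lambda,\kappa_1,\dots,\kappa_n<3$ (vacuous when $n\ge3$). *)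

theory Defs
  imports Main
begin

text \<open>A relation-type algebra on the whole of a type 'a, given by its operations
  plus (join), cm (complement), cp (relative composition ;), cv (converse), e (identity 1').\<close>

definition wmeet :: "('a \<Rightarrow> 'a \<Rightarrow> 'a) \<Rightarrow> ('a \<Rightarrow> 'a) \<Rightarrow> 'a \<Rightarrow> 'a \<Rightarrow> 'a" where
  "wmeet pl cm x y = cm (pl (cm x) (cm y))"

definition wtop :: "('a \<Rightarrow> 'a \<Rightarrow> 'a) \<Rightarrow> ('a \<Rightarrow> 'a) \<Rightarrow> 'a \<Rightarrow> 'a" where
  "wtop pl cm e = pl e (cm e)"

definition wbot :: "('a \<Rightarrow> 'a \<Rightarrow> 'a) \<Rightarrow> ('a \<Rightarrow> 'a) \<Rightarrow> 'a \<Rightarrow> 'a" where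
  "wbot pl cm e = cm (wtop pl cm e)"

definition wleq :: "('a \<Rightarrow> 'a \<Rightarrow> 'a) \<Rightarrow> 'a \<Rightarrow> 'a \<Rightarrow> bool" where
  "wleq pl x y \<longleftrightarrow> pl x y = y"

definition WA :: "('a \<Rightarrow> 'a \<Rightarrow> 'a) \<Rightarrow> ('a \<Rightarrow> 'a) \<Rightarrow> ('a \<Rightarrow> 'a \<Rightarrow> 'a) \<Rightarrow> ('a \<Rightarrow> 'a) \<Rightarrow> 'a \<Rightarrow> bool" where
  "WA pl cm cp cv e \<longleftrightarrow>
    (\<forall>x y. pl x y = pl y x) \<and>
    (\<forall>x y z. pl x (pl y z) = pl (pl x y) z) \<and>
    (\<forall>x y. pl (cm (pl (cm x) (cm y))) (cm (pl (cm x) y)) = x) \<and>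
    (\<forall>x. cp (cp (wmeet pl cm x e) (wtop pl cm e)) (wtop pl cm e)
          = cp (wmeet pl cm x e) (wtop pl cm e)) \<and>
    (\<forall>x y z. cp (pl x y) z = pl (cp x z) (cp y z)) \<and>
    (\<forall>x. cp x e = x) \<and>
    (\<forall>x. cv (cv x) = x) \<and>
    (\<forall>x y. cv (pl x y) = pl (cv x) (cv y)) \<and>
    (\<forall>x y. cv (cp x y) = cp (cv y) (cv x)) \<and>
    (\<forall>x y. pl (cp (cv x) (cm (cp x y))) (cm y) = cm y)"

definition wAt :: "('a \<Rightarrow> 'a \<Rightarrow> 'a) \<Rightarrow> ('a \<Rightarrow> 'a) \<Rightarrow> 'a \<Rightarrow> 'a set" where
  "wAt pl cm e = {a. a \<noteq> wbot pl cm e \<and>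
     (\<forall>x. wleq pl x a \<longrightarrow> x = wbot pl cm e \<or> x = a)}"

definition watomic :: "('a \<Rightarrow> 'a \<Rightarrow> 'a) \<Rightarrow> ('a \<Rightarrow> 'a) \<Rightarrow> 'a \<Rightarrow> bool" where
  "watomic pl cm e \<longleftrightarrow>
     (\<forall>x. x \<noteq> wbot pl cm e \<longrightarrow> (\<exists>a\<in>wAt pl cm e. wleq pl a x))"

fun sel :: "'a \<times> 'a \<times> 'a \<Rightarrow> nat \<Rightarrow> 'a" where
  "sel (a, b, c) k = (if k = 0 then a else if k = 1 then b else c)"

definition suitB :: "('a \<Rightarrow> 'a \<Rightarrow> 'a) \<Rightarrow> ('a \<Rightarrow> 'a) \<Rightarrow> ('a \<Rightarrow> 'a \<Rightarrow> 'a) \<Rightarrow> 'a \<Rightarrow> ('a \<times> 'a \<times> 'a) set" where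
  "suitB pl cm cp e = {s. sel s 0 \<in> wAt pl cm e \<and> sel s 1 \<in> wAt pl cm e \<and> sel s 2 \<in> wAt pl cm e \<and>
      wleq pl (sel s 1) (cp (sel s 2) (sel s 0))}"

definition suitT :: "('a \<times> 'a \<times> 'a) set \<Rightarrow> nat \<Rightarrow> (('a \<times> 'a \<times> 'a) \<times> ('a \<times> 'a \<times> 'a)) set" where
  "suitT B k = {(s, t). s \<in> B \<and> t \<in> B \<and> sel s k = sel t k}"

definition suitE :: "('a \<Rightarrow> 'a \<Rightarrow> 'a) \<Rightarrow> 'a \<Rightarrow> ('a \<times> 'a \<times> 'a) set \<Rightarrow> nat \<Rightarrow> nat \<Rightarrow> ('a \<times> 'a \<times> 'a) set" where
  "suitE pl e B k l = (if k = l then B else {s \<in> B. wleq pl (sel s (3 - k - l)) e})"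

definition Tstar :: "('b \<times> 'b) set \<Rightarrow> 'b set \<Rightarrow> 'b set" where
  "Tstar T X = {y. \<exists>x\<in>X. (y, x) \<in> T}"

text \<open>Complex algebra operations: c_k = T_k^*, d_{kl} = E_{kl}, s^k_l x = c_k (d_{kl} \<inter> x).\<close>
definition cmC :: "('a \<Rightarrow> 'a \<Rightarrow> 'a) \<Rightarrow> ('a \<Rightarrow> 'a) \<Rightarrow> ('a \<Rightarrow> 'a \<Rightarrow> 'a) \<Rightarrow> 'a \<Rightarrow> nat \<Rightarrow> ('a \<times> 'a \<times> 'a) set \<Rightarrow> ('a \<times> 'a \<times> 'a) set" where
  "cmC pl cm cp e k X = Tstar (suitT (suitB pl cm cp e) k) X"

definition cmS :: "('a \<Rightarrow> 'a \<Rightarrow> 'a) \<Rightarrow> ('a \<Rightarrow> 'a) \<Rightarrow> ('a \<Rightarrow> 'a \<Rightarrow> 'a) \<Rightarrow> 'a \<Rightarrow> nat \<Rightarrow> nat \<Rightarrow> ('a \<times> 'a \<times> 'a) set \<Rightarrow> ('a \<times> 'a \<times> 'a) set" where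
  "cmS pl cm cp e k l X = cmC pl cm cp e k (suitE pl e (suitB pl cm cp e) k l \<inter> X)"

fun sChain :: "('a \<Rightarrow> 'a \<Rightarrow> 'a) \<Rightarrow> ('a \<Rightarrow> 'a) \<Rightarrow> ('a \<Rightarrow> 'a \<Rightarrow> 'a) \<Rightarrow> 'a \<Rightarrow> nat list \<Rightarrow> ('a \<times> 'a \<times> 'a) set \<Rightarrow> ('a \<times> 'a \<times> 'a) set" where
  "sChain pl cm cp e (a # b # rest) X = cmS pl cm cp e a b (sChain pl cm cp e (b # rest) X)"
| "sChain pl cm cp e _ X = X"

definition MGR_Cm :: "('a \<Rightarrow> 'a \<Rightarrow> 'a) \<Rightarrow> ('a \<Rightarrow> 'a) \<Rightarrow> ('a \<Rightarrow> 'a \<Rightarrow> 'a) \<Rightarrow> 'a \<Rightarrow> nat \<Rightarrow> bool" where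
  "MGR_Cm pl cm cp e n \<longleftrightarrow>
    (\<forall>lam ks X. length ks = n \<longrightarrow> distinct (lam # ks) \<longrightarrow> (\<forall>k\<in>set (lam # ks). k < 3) \<longrightarrow>
       X \<subseteq> suitB pl cm cp e \<longrightarrow>
       sChain pl cm cp e (lam # ks @ [lam]) (cmC pl cm cp e lam X)
     = sChain pl cm cp e (lam # last ks # butlast ks @ [lam]) (cmC pl cm cp e lam X))"

end

theory Submission
  imports Defs
begin
locale hunt = fixes pl :: "'a \<Rightarrow> 'a \<Rightarrow> 'a" and cm :: "'a \<Rightarrow> 'a"
  assumes comm: "pl x y = pl y x" and assoc: "pl x (pl y z) = pl (pl x y) z"
  and hu: "pl (cm (pl (cm x) (cm y))) (cm (pl (cm x) y)) = x"
begin
lemma l2: "cm (cm x) = x"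
  by (smt (verit) assoc comm hu)
lemma l1: "pl x (cm x) = pl y (cm y)"
proof -
  have f1: "\<forall>a aa ab. pl a (pl ab aa) = pl aa (pl a ab)"
    by (metis assoc comm)
  then have f2: "\<forall>a aa ab. pl ab (pl aa a) = pl a (pl aa ab)"
    using comm by fastforce
  have f3: "\<forall>a aa. pl (cm (pl aa a)) (cm (pl (cm a) aa)) = cm aa"
    by (metis comm hu l2)
  then have f4: "\<forall>a aa ab. pl (cm (pl ab aa)) (pl a (cm (pl (cm aa) ab))) = pl a (cm ab)"
    using f2 f1 by simp
  have "\<forall>a aa. pl a (cm (pl (cm aa) a)) = pl aa (cm (pl (cm a) aa))"
    using f1 by (smt (verit) comm hu l2)
  then show ?thesis
    using f4 f3 f1 by (metis (full_types) comm)
qed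
lemma l3: "pl x x = x"
proof -
  have f1: "\<forall>a aa. pl aa (cm aa) = pl (cm a) a"
    by (metis l1 l2)
  have f2: "\<forall>a aa. cm a = pl (cm (pl a (cm aa))) (cm (pl a aa))"
    by (metis hu l2)
  have f3: "\<forall>a aa ab. pl (cm (pl (cm aa) (cm ab))) (pl (cm (pl (cm aa) ab)) a) = pl aa a"
    by (simp add: assoc hu)
  have f4: "\<forall>a aa. pl (cm (pl (cm a) (cm a))) (cm (pl aa (cm aa))) = a"
    by (metis (no_types) hu l1 l2)
  then have f5: "\<forall>a aa. pl (pl (cm a) (cm a)) a = pl aa (cm aa)"
    by (metis (full_types) assoc l1)
  have f6: "\<forall>a aa. pl a (cm (pl (cm a) aa)) = pl (cm (pl (cm a) aa)) a"
    using f3 by (metis (no_types) hu l2)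
  have f7: "\<forall>a aa. pl aa (cm aa) = pl a (pl a (cm a))"
    using f5 by (metis assoc l2)
  have f8: "\<forall>a aa. pl a (cm (pl (cm aa) aa)) = pl (cm (pl (cm aa) aa)) a"
    using f6 f1 by metis
  have "\<forall>a aa. pl (cm (pl (cm a) a)) (cm a) = pl (cm (pl (cm (pl (cm (pl (cm a) a)) (cm a))) (pl a (cm (pl aa (cm aa)))))) (cm (pl (cm a) a))"
    using f4 f3 by (metis (no_types) hu l2)
  then have "\<forall>a. cm a = pl (cm a) (cm (pl (cm a) a))"
    using f8 f7 f3 f2 f1 by (metis (no_types) l2)
  then have "\<forall>a. pl (cm a) (cm a) = cm a"
    by (metis hu l1 l2)
  then show ?thesis by (metis l2)
qed
lemma l6: "pl (cm (pl (cm x) (cm y))) x = x"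
  by (metis hu assoc l3)
lemma l4: "pl x (pl y (cm y)) = pl y (cm y)"
proof -
  have f1: "\<forall>a aa ab. pl aa a = pl (cm (pl (cm aa) (cm ab))) (pl (cm (pl (cm aa) ab)) a)"
    using assoc hu by auto
  have f2: "\<forall>a aa ab. pl ab (pl a (cm a)) = pl aa (pl (cm aa) (cm (cm ab)))"
    by (metis (full_types) assoc l1)
  have f3: "\<forall>a aa ab. pl (cm aa) (pl (cm (pl ab (cm ab))) aa) = pl a (cm a)"
    using f1 by (metis (no_types) assoc hu l1)
  then have "\<exists>a aa. pl a (cm a) = pl (cm (cm x)) (pl aa (cm aa))"
    using f2 f1 by (metis (no_types))
  then have "\<exists>a aa. pl aa (cm aa) = pl x (pl a (cm a))"
    using f3 by (smt (verit) assoc)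
  then show ?thesis
    by (metis (no_types) l1)
qed
lemma l5: "pl x (cm (pl y (cm y))) = x"
proof -
  have f1: "\<forall>a aa ab. pl (cm (pl (cm aa) (cm ab))) (pl (cm (pl (cm aa) ab)) a) = pl aa a"
    by (simp add: assoc hu)
  have f2: "\<forall>a aa ab. pl (pl (cm aa) (cm ab)) aa = pl (pl a (cm a)) (cm (pl (cm aa) ab))"
    by (metis (full_types) assoc hu l1)
  have "\<exists>a aa. x = pl x (cm (pl (cm a) (pl aa (cm aa))))"
    using f1 by (metis (no_types) hu l1)
  then have "\<exists>a. x = pl x (cm (pl (cm a) (pl (cm a) (pl a (cm (pl (cm a) a))))))"
    by (metis (no_types) assoc l1)
  then have "\<exists>a aa. x = pl x (cm (pl (cm aa) (pl (cm aa) (pl (cm (pl a (cm a))) aa))))"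
    using f1 by (metis (full_types) hu)
  then have "\<exists>a. x = pl x (cm (pl a (cm a)))"
    using f2 by (metis assoc)
  then show ?thesis
    by (metis l1)
qed
lemma l7: "cm (pl (cm x) (cm y)) = cm (pl z (cm z)) \<Longrightarrow> pl x (cm y) = cm y"
  by (metis comm hu l1 l3)
end


lemma perm3: "{k,l,m} = {0,1,2::nat} \<Longrightarrow>
  (k,l,m) \<in> {(0,1,2),(0,2,1),(1,0,2),(1,2,0),(2,0,1),(2,1,0)}"
proof -
  assume a: "{k,l,m} = {0,1,2::nat}"
  have k: "k = 0 \<or> k = 1 \<or> k = 2" and l: "l = 0 \<or> l = 1 \<or> l = 2" and m: "m = 0 \<or> m = 1 \<or> m = 2"
    using a by blast+
  have c: "(0::nat) \<in> {k,l,m}" "(1::nat) \<in> {k,l,m}" "(2::nat) \<in> {k,l,m}" using a by blast+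
  from k l m c show ?thesis by (elim disjE) simp_all
qed

locale wal = fixes pl :: "'a \<Rightarrow> 'a \<Rightarrow> 'a" and cm :: "'a \<Rightarrow> 'a" and cp :: "'a \<Rightarrow> 'a \<Rightarrow> 'a"
    and cv :: "'a \<Rightarrow> 'a" and e :: 'a
  assumes WAax: "WA pl cm cp cv e" and atm: "watomic pl cm e"
begin

abbreviation le where "le \<equiv> wleq pl"
abbreviation bot where "bot \<equiv> wbot pl cm e"
abbreviation At where "At \<equiv> wAt pl cm e"

lemma comm: "pl x y = pl y x" using WAax unfolding WA_def by blast
lemma assoc: "pl x (pl y z) = pl (pl x y) z" using WAax unfolding WA_def by blast
lemma hu: "pl (cm (pl (cm x) (cm y))) (cm (pl (cm x) y)) = x" using WAax unfolding WA_def by blast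
lemma rdist: "cp (pl x y) z = pl (cp x z) (cp y z)" using WAax unfolding WA_def by blast
lemma rid: "cp x e = x" using WAax unfolding WA_def by blast
lemma cvcv: "cv (cv x) = x" using WAax unfolding WA_def by blast
lemma cvpl: "cv (pl x y) = pl (cv x) (cv y)" using WAax unfolding WA_def by blast
lemma cvcp: "cv (cp x y) = cp (cv y) (cv x)" using WAax unfolding WA_def by blast
lemma peirce: "le (cp (cv x) (cm (cp x y))) (cm y)" using WAax unfolding WA_def wleq_def by blast

sublocale hunt pl cm by unfold_locales (fact comm assoc hu)+

lemma le_refl: "le x x" unfolding wleq_def by (rule l3)
lemma le_trans: "le x y \<Longrightarrow> le y z \<Longrightarrow> le x z" unfolding wleq_def by (metis assoc)
lemma le_antisym: "le x y \<Longrightarrow> le y x \<Longrightarrow> x = y" unfolding wleq_def by (metis comm)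
lemma bot_le: "le bot x" unfolding wleq_def wbot_def wtop_def by (metis comm l5)
lemma le_cm_self: "le x (cm x) \<Longrightarrow> x = bot" unfolding wleq_def wbot_def wtop_def by (metis l1 l2)
lemma meet_bot: "wmeet pl cm x y = bot \<Longrightarrow> le x (cm y)"
  unfolding wleq_def wbot_def wtop_def wmeet_def by (rule l7)
lemma meet_le1: "le (wmeet pl cm x y) x" unfolding wleq_def wmeet_def by (rule l6)
lemma meet_le2: "le (wmeet pl cm x y) y" unfolding wleq_def wmeet_def by (metis l6 comm)

lemma atom_eq: "a \<in> At \<Longrightarrow> b \<in> At \<Longrightarrow> le a b \<Longrightarrow> a = b"
  unfolding wAt_def by blast
lemma atom_split: assumes "a \<in> At" shows "le a y \<or> le a (cm y)"
proof -
  have "le (wmeet pl cm a y) a" by (rule meet_le1)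
  then have "wmeet pl cm a y = bot \<or> wmeet pl cm a y = a" using assms unfolding wAt_def by blast
  then show ?thesis
  proof
    assume "wmeet pl cm a y = bot" then show ?thesis using meet_bot by blast
  next
    assume "wmeet pl cm a y = a" then show ?thesis using meet_le2[of a y] by simp
  qed
qed
lemma atom_nz: "a \<in> At \<Longrightarrow> a \<noteq> bot" unfolding wAt_def by blast

lemma mono_l: "le x y \<Longrightarrow> le (cp x z) (cp y z)"
  unfolding wleq_def using rdist by metis
lemma ldist: "cp z (pl x y) = pl (cp z x) (cp z y)"
proof -
  have "cp z (pl x y) = cv (cv (cp z (pl x y)))" by (simp add: cvcv)
  also have "\<dots> = cv (cp (pl (cv x) (cv y)) (cv z))" by (simp add: cvcp cvpl)
  also have "\<dots> = pl (cp z x) (cp z y)" by (simp add: rdist cvpl cvcp cvcv)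
  finally show ?thesis .
qed
lemma mono_r: "le x y \<Longrightarrow> le (cp z x) (cp z y)"
  unfolding wleq_def using ldist by metis
lemma cv_mono: "le x y \<Longrightarrow> le (cv x) (cv y)"
  unfolding wleq_def using cvpl by metis
lemma cv_le: "le (cv x) y \<Longrightarrow> le x (cv y)"
  using cv_mono cvcv by metis
lemma cve: "cv e = e"
proof -
  have "e = cv (cv e)" by (simp add: cvcv)
  also have "\<dots> = cv (cp (cv e) e)" by (simp add: rid)
  also have "\<dots> = cp (cv e) e" by (simp add: cvcp cvcv)
  also have "\<dots> = cv e" by (simp add: rid)
  finally show ?thesis by simp
qed
lemma lid: "cp e x = x"
proof -
  have "cp e x = cv (cv (cp e x))" by (simp add: cvcv)
  also have "\<dots> = x" by (simp add: cvcp cve rid cvcv)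
  finally show ?thesis .
qed
lemma cv_bot: "cv bot = bot"
proof -
  have "le (cv bot) (cv (cv bot))" using bot_le cv_mono by blast
  then have "le (cv bot) bot" by (simp add: cvcv)
  then show ?thesis using bot_le le_antisym by blast
qed
lemma cv_atom: assumes "a \<in> At" shows "cv a \<in> At"
proof -
  have "cv a \<noteq> bot" using assms cv_bot cvcv atom_nz by metis
  moreover have "x = bot \<or> x = cv a" if "le x (cv a)" for x
  proof -
    have "le (cv x) a" using that cv_mono cvcv by metis
    then have "cv x = bot \<or> cv x = a" using assms unfolding wAt_def by blast
    then show ?thesis using cvcv cv_bot by metis
  qed
  ultimately show ?thesis unfolding wAt_def by blast
qed

lemma C1: assumes "b \<in> At" "c \<in> At" "le c (cp a b)" shows "le b (cp (cv a) c)"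
proof (rule ccontr)
  assume "\<not> le b (cp (cv a) c)"
  then have "le b (cm (cp (cv a) c))" using atom_split assms(1) by blast
  then have "le (cp a b) (cp a (cm (cp (cv a) c)))" by (rule mono_r)
  moreover have "le (cp a (cm (cp (cv a) c))) (cm c)" using peirce[of "cv a" c] by (simp add: cvcv)
  ultimately have "le c (cm c)" using assms(3) le_trans by blast
  then show False using le_cm_self atom_nz assms(2) by blast
qed

lemma C2: assumes "a \<in> At" "c \<in> At" "le c (cp a b)" shows "le a (cp c (cv b))"
proof -
  have "le (cv c) (cp (cv b) (cv a))" using cv_mono[OF assms(3)] by (simp add: cvcp)
  then have "le (cv a) (cp b (cv c))" using C1[of "cv a" "cv c" "cv b"] cv_atom assms by (simp add: cvcv)
  then have "le a (cv (cp b (cv c)))" by (rule cv_le)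
  then show ?thesis by (simp add: cvcp cvcv)
qed

definition idat where "idat x \<longleftrightarrow> x \<in> At \<and> le x e"

lemma F1: "s0 \<in> At \<Longrightarrow> s1 \<in> At \<Longrightarrow> idat x \<Longrightarrow> le s1 (cp x s0) \<Longrightarrow> s1 = s0"
  unfolding idat_def using mono_l[of x e s0] lid le_trans atom_eq by metis
lemma F2: "s2 \<in> At \<Longrightarrow> s1 \<in> At \<Longrightarrow> idat x \<Longrightarrow> le s1 (cp s2 x) \<Longrightarrow> s1 = s2"
  unfolding idat_def using mono_r[of x e s2] rid le_trans atom_eq by metis
lemma F3: assumes "s0 \<in> At" "s2 \<in> At" "idat x" "le x (cp s2 s0)" shows "s0 = cv s2"
proof -
  have "le s0 (cp (cv s2) x)" using C1 assms unfolding idat_def by blast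
  moreover have "le (cp (cv s2) x) (cv s2)" using mono_r[of x e "cv s2"] rid assms(3) unfolding idat_def by metis
  ultimately show ?thesis using atom_eq cv_atom assms le_trans by metis
qed

lemma dom_ex: assumes "b \<in> At" shows "\<exists>x. idat x \<and> le x (cp b (cv b)) \<and> le b (cp x b)"
proof -
  have "wmeet pl cm e (cp b (cv b)) \<noteq> bot"
  proof
    assume "wmeet pl cm e (cp b (cv b)) = bot"
    then have "le e (cm (cp b (cv b)))" by (rule meet_bot)
    then have "le (cp (cv b) e) (cp (cv b) (cm (cp b (cv b))))" by (rule mono_r)
    then have "le (cv b) (cm (cv b))" using peirce[of b "cv b"] rid le_trans by metis
    then show False using le_cm_self atom_nz cv_atom assms by blast
  qed
  then obtain x where x: "x \<in> At" "le x (wmeet pl cm e (cp b (cv b)))"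
    using atm unfolding watomic_def by blast
  then have "idat x" "le x (cp b (cv b))" unfolding idat_def using meet_le1 meet_le2 le_trans by blast+
  moreover have "le b (cp x b)" using C2[OF assms x(1) \<open>le x (cp b (cv b))\<close>] by (simp add: cvcv)
  ultimately show ?thesis by blast
qed

lemma ran_ex: assumes "b \<in> At" shows "\<exists>x. idat x \<and> le x (cp (cv b) b) \<and> le b (cp b x)"
proof -
  have "wmeet pl cm e (cp (cv b) b) \<noteq> bot"
  proof
    assume "wmeet pl cm e (cp (cv b) b) = bot"
    then have "le e (cm (cp (cv b) b))" by (rule meet_bot)
    then have "le (cp b e) (cp b (cm (cp (cv b) b)))" by (rule mono_r)
    then have "le b (cm b)" using peirce[of "cv b" b] rid le_trans cvcv by metis
    then show False using le_cm_self atom_nz assms by blast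
  qed
  then obtain x where x: "x \<in> At" "le x (wmeet pl cm e (cp (cv b) b))"
    using atm unfolding watomic_def by blast
  then have "idat x" "le x (cp (cv b) b)" unfolding idat_def using meet_le1 meet_le2 le_trans by blast+
  moreover have "le b (cp b x)" using C1[OF assms x(1) \<open>le x (cp (cv b) b)\<close>] by (simp add: cvcv)
  ultimately show ?thesis by blast
qed


abbreviation BB where "BB \<equiv> suitB pl cm cp e"
definition R :: "nat \<Rightarrow> 'a \<Rightarrow> 'a" where "R mu x = (if mu = 1 then cv x else x)"

lemma inB: "(a,b,c) \<in> BB \<longleftrightarrow> a \<in> At \<and> b \<in> At \<and> c \<in> At \<and> le b (cp c a)"
  unfolding suitB_def by simp

lemma K: assumes "s \<in> BB" "i < 3" "j < 3" "i \<noteq> j" "le (sel s (3-i-j)) e"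
  shows "sel s j = R (3-i-j) (sel s i)"
proof -
  obtain a b c where s: "s = (a,b,c)" by (cases s) auto
  have ab: "a \<in> At" "b \<in> At" "c \<in> At" "le b (cp c a)" using assms(1) s inB by auto
  have "i = 0 \<and> j = 1 \<or> i = 1 \<and> j = 0 \<or> i = 0 \<and> j = 2 \<or> i = 2 \<and> j = 0 \<or> i = 1 \<and> j = 2 \<or> i = 2 \<and> j = 1"
    using assms(2-4) by auto
  then show ?thesis
  proof (elim disjE conjE)
    assume "i = 0" "j = 1"
    then have "idat c" using assms(5) ab s unfolding idat_def by simp
    then show ?thesis using F1[OF ab(1,2) _ ab(4)] s \<open>i=0\<close> \<open>j=1\<close> by (simp add: R_def)
  next
    assume "i = 1" "j = 0"
    then have "idat c" using assms(5) ab s unfolding idat_def by simp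
    then show ?thesis using F1[OF ab(1,2) _ ab(4)] s \<open>i=1\<close> \<open>j=0\<close> by (simp add: R_def)
  next
    assume "i = 0" "j = 2"
    then have "idat b" using assms(5) ab s unfolding idat_def by simp
    then have "a = cv c" using F3[OF ab(1,3)] ab(4) by blast
    then show ?thesis using s \<open>i=0\<close> \<open>j=2\<close> by (simp add: R_def cvcv)
  next
    assume "i = 2" "j = 0"
    then have "idat b" using assms(5) ab s unfolding idat_def by simp
    then have "a = cv c" using F3[OF ab(1,3)] ab(4) by blast
    then show ?thesis using s \<open>i=2\<close> \<open>j=0\<close> by (simp add: R_def cvcv)
  next
    assume "i = 1" "j = 2"
    then have "idat a" using assms(5) ab s unfolding idat_def by simp
    then show ?thesis using F2[OF ab(3,2) _ ab(4)] s \<open>i=1\<close> \<open>j=2\<close> by (simp add: R_def)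
  next
    assume "i = 2" "j = 1"
    then have "idat a" using assms(5) ab s unfolding idat_def by simp
    then show ?thesis using F2[OF ab(3,2) _ ab(4)] s \<open>i=2\<close> \<open>j=1\<close> by (simp add: R_def)
  qed
qed

lemma Ex: assumes "a \<in> At" "i < 3" "j < 3" "i \<noteq> j"
  shows "\<exists>s\<in>BB. le (sel s (3-i-j)) e \<and> sel s i = a \<and> sel s j = R (3-i-j) a"
proof -
  obtain x where x: "x \<in> At" "le x e" "le x (cp a (cv a))" "le a (cp x a)" using dom_ex[OF assms(1)]
    unfolding idat_def by blast
  obtain y where y: "y \<in> At" "le y e" "le y (cp (cv a) a)" "le a (cp a y)" using ran_ex[OF assms(1)]
    unfolding idat_def by blast
  have ca: "cv a \<in> At" using cv_atom assms(1) .
  have s1: "(a,a,x) \<in> BB" using x assms(1) by (simp only: inB simp_thms)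
  have s2: "(y,a,a) \<in> BB" using y assms(1) by (simp only: inB simp_thms)
  have s3: "(a,y,cv a) \<in> BB" using y assms(1) ca by (simp only: inB simp_thms)
  have s4: "(cv a,x,a) \<in> BB" using x assms(1) ca by (simp add: inB cvcv)
  have "i = 0 \<and> j = 1 \<or> i = 1 \<and> j = 0 \<or> i = 0 \<and> j = 2 \<or> i = 2 \<and> j = 0 \<or> i = 1 \<and> j = 2 \<or> i = 2 \<and> j = 1"
    using assms(2-4) by auto
  then show ?thesis
  proof (elim disjE conjE)
    assume "i = 0" "j = 1"
    then show ?thesis using x s1 by (intro bexI[of _ "(a,a,x)"]) (simp_all add: R_def)
  next
    assume "i = 1" "j = 0"
    then show ?thesis using x s1 by (intro bexI[of _ "(a,a,x)"]) (simp_all add: R_def)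
  next
    assume "i = 0" "j = 2"
    then show ?thesis using y s3 by (intro bexI[of _ "(a,y,cv a)"]) (simp_all add: R_def)
  next
    assume "i = 2" "j = 0"
    then show ?thesis using x s4 by (intro bexI[of _ "(cv a,x,a)"]) (simp_all add: R_def)
  next
    assume "i = 1" "j = 2"
    then show ?thesis using y s2 by (intro bexI[of _ "(y,a,a)"]) (simp_all add: R_def)
  next
    assume "i = 2" "j = 1"
    then show ?thesis using y s2 by (intro bexI[of _ "(y,a,a)"]) (simp_all add: R_def)
  qed
qed

lemma sel_at: assumes "x \<in> BB" "i < 3" shows "sel x i \<in> At"
proof -
  have "i = 0 \<or> i = 1 \<or> i = 2" using assms(2) by auto
  then show ?thesis using assms(1) unfolding suitB_def by auto
qed

lemma main: assumes "{k,l,m} = {0,1,2::nat}"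
  shows "Tstar (suitT BB k) (suitE pl e BB k l \<inter> Tstar (suitT BB l) (suitE pl e BB l m \<inter>
         Tstar (suitT BB m) (suitE pl e BB m k \<inter> Tstar (suitT BB k) X)))
    = {v\<in>BB. \<exists>x\<in>X. x \<in> BB \<and> sel x k = cv (sel v k)}" (is "?L = ?R")
proof -
  have p0: "k<3 \<and> l<3 \<and> m<3 \<and> k\<noteq>l \<and> l\<noteq>m \<and> m\<noteq>k \<and> 3-k-l = m \<and> 3-l-m = k \<and> 3-m-k = l \<and> 3-k-m = l \<and> 3-m-l = k \<and> 3-l-k = m \<and>
     (\<forall>a. R m (R k (R l a)) = cv a)" using perm3[OF assms]
    by (simp only: insert_iff empty_iff prod.inject) (elim disjE conjE; simp add: R_def)
  then have p: "k<3" "l<3" "m<3" "k\<noteq>l" "l\<noteq>m" "m\<noteq>k" "3-k-l = m" "3-l-m = k" "3-m-k = l"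
     "\<forall>a. R m (R k (R l a)) = cv a" "3-k-m = l" "3-m-l = k" "3-l-k = m" by simp_all
  have E1: "suitE pl e BB k l = {s\<in>BB. le (sel s m) e}" using p by (simp add: suitE_def)
  have E2: "suitE pl e BB l m = {s\<in>BB. le (sel s k) e}" using p by (simp add: suitE_def)
  have E3: "suitE pl e BB m k = {s\<in>BB. le (sel s l) e}" using p by (simp add: suitE_def)
  have L: "v \<in> ?L \<longleftrightarrow> v \<in> BB \<and> (\<exists>u t s x. u\<in>BB \<and> t\<in>BB \<and> s\<in>BB \<and> x\<in>X \<and> x\<in>BB \<and>
     sel v k = sel u k \<and> le (sel u m) e \<and> sel u l = sel t l \<and> le (sel t k) e \<and>
     sel t m = sel s m \<and> le (sel s l) e \<and> sel s k = sel x k)" for v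
    unfolding E1 E2 E3 Tstar_def suitT_def by blast
  show ?thesis
  proof (rule set_eqI)
    fix v
    show "v \<in> ?L \<longleftrightarrow> v \<in> ?R"
    proof
      assume "v \<in> ?L"
      then obtain u t s x where h: "v \<in> BB" "u\<in>BB" "t\<in>BB" "s\<in>BB" "x\<in>X" "x\<in>BB"
        "sel v k = sel u k" "le (sel u m) e" "sel u l = sel t l" "le (sel t k) e"
        "sel t m = sel s m" "le (sel s l) e" "sel s k = sel x k" using L by blast
      have "sel s m = R l (sel s k)" using K[of s k m] h p by simp
      moreover have "sel t l = R k (sel t m)" using K[of t m l] h p by simp
      moreover have "sel u k = R m (sel u l)" using K[of u l k] h p by simp
      ultimately have "sel v k = cv (sel x k)" using h p(10) by simp
      then show "v \<in> ?R" using h by (auto simp: cvcv)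
    next
      assume "v \<in> ?R"
      then obtain x where h: "v \<in> BB" "x \<in> X" "x \<in> BB" "sel x k = cv (sel v k)" by blast
      have at: "sel x k \<in> At" using sel_at h(3) p(1) by blast
      have ra: "b \<in> At \<Longrightarrow> R mu b \<in> At" for b mu using cv_atom by (simp add: R_def)
      have km: "k \<noteq> m" using p by simp
      obtain s where s: "s \<in> BB" "le (sel s l) e" "sel s k = sel x k" "sel s m = R l (sel x k)"
        using Ex[OF at(1) p(1) p(3) km, unfolded p(11)] by blast
      have ml: "m \<noteq> l" using p by simp
      obtain t where t: "t \<in> BB" "le (sel t k) e" "sel t m = sel s m" "sel t l = R k (sel s m)"
        using Ex[OF ra[OF at(1)] p(3) p(2) ml, of l, unfolded p(12) s(4)[symmetric]] by blast
      have lk: "l \<noteq> k" using p by simp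
      obtain u where u: "u \<in> BB" "le (sel u m) e" "sel u l = sel t l" "sel u k = R m (sel t l)"
        using Ex[OF ra[OF ra[OF at(1)]] p(2) p(1) lk, of k l, unfolded p(13) s(4)[symmetric] t(4)[symmetric]] by blast
      have "sel u k = sel v k" using u t s h(4) p(10) by (simp add: cvcv)
      then have "\<exists>u t s x. u\<in>BB \<and> t\<in>BB \<and> s\<in>BB \<and> x\<in>X \<and> x\<in>BB \<and>
     sel v k = sel u k \<and> le (sel u m) e \<and> sel u l = sel t l \<and> le (sel t k) e \<and>
     sel t m = sel s m \<and> le (sel s l) e \<and> sel s k = sel x k"
        using h s t u by (intro exI[of _ u] exI[of _ t] exI[of _ s] exI[of _ x]) simp
      then show "v \<in> ?L" using L h(1) by blast
    qed
  qed
qed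

end

lemma three: assumes "distinct [a,b,c::nat]" "a < 3" "b < 3" "c < 3" shows "{a,b,c} = {0,1,2}"
proof -
  have "a = 0 \<or> a = 1 \<or> a = 2" "b = 0 \<or> b = 1 \<or> b = 2" "c = 0 \<or> c = 1 \<or> c = 2"
    using assms(2-4) by auto
  then show ?thesis using assms(1) by (elim disjE) auto
qed

theorem lemma7:
  fixes pl :: "'a \<Rightarrow> 'a \<Rightarrow> 'a" and cm :: "'a \<Rightarrow> 'a" and cp :: "'a \<Rightarrow> 'a \<Rightarrow> 'a"
    and cv :: "'a \<Rightarrow> 'a" and e :: 'a
  assumes "WA pl cm cp cv e" and "watomic pl cm e"
  defines "B \<equiv> suitB pl cm cp e"
  shows "(\<forall>n. 2 \<le> n \<longrightarrow> MGR_Cm pl cm cp e n) \<and>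
    (\<forall>X k l m. X \<subseteq> B \<longrightarrow> {k, l, m} = {0, 1, 2::nat} \<longrightarrow>
       Tstar (suitT B k) (suitE pl e B k l \<inter> Tstar (suitT B l) (suitE pl e B l m \<inter>
         Tstar (suitT B m) (suitE pl e B m k \<inter> Tstar (suitT B k) X)))
     = Tstar (suitT B k) (suitE pl e B k m \<inter> Tstar (suitT B m) (suitE pl e B m l \<inter>
         Tstar (suitT B l) (suitE pl e B l k \<inter> Tstar (suitT B k) X))))"
proof -
  interpret W: wal pl cm cp cv e using assms(1,2) by unfold_locales
  have sw: "Tstar (suitT B k) (suitE pl e B k l \<inter> Tstar (suitT B l) (suitE pl e B l m \<inter>
         Tstar (suitT B m) (suitE pl e B m k \<inter> Tstar (suitT B k) X)))
     = Tstar (suitT B k) (suitE pl e B k m \<inter> Tstar (suitT B m) (suitE pl e B m l \<inter>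
         Tstar (suitT B l) (suitE pl e B l k \<inter> Tstar (suitT B k) X)))"
    if h: "{k, l, m} = {0, 1, 2::nat}" for X k l m
  proof -
    have h2: "{k, m, l} = {0, 1, 2::nat}" using h by (simp add: insert_commute)
    show ?thesis unfolding B_def W.main[OF h] W.main[OF h2] ..
  qed
  have mgr: "MGR_Cm pl cm cp e n" if "2 \<le> n" for n
    unfolding MGR_Cm_def
  proof (intro allI impI)
    fix lam :: nat and ks :: "nat list" and X
    assume len: "length ks = n" and d: "distinct (lam # ks)" and lt: "\<forall>k\<in>set (lam # ks). k < 3"
      and "X \<subseteq> suitB pl cm cp e"
    have "set (lam # ks) \<subseteq> {0,1,2}" using lt by auto
    then have "card (set (lam # ks)) \<le> card {0,1,2::nat}" by (intro card_mono) auto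
    then have "Suc n \<le> 3" using distinct_card[OF d] len by simp
    then have n2: "n = 2" using that by simp
    then obtain k1 k2 where ks: "ks = [k1, k2]" using len
      by (metis (no_types, lifting) One_nat_def Suc_1 length_0_conv length_Suc_conv)
    have hs: "{lam, k1, k2} = {0,1,2}" using three[of lam k1 k2] d lt ks by simp
    show "sChain pl cm cp e (lam # ks @ [lam]) (cmC pl cm cp e lam X)
       = sChain pl cm cp e (lam # last ks # butlast ks @ [lam]) (cmC pl cm cp e lam X)"
      using sw[OF hs, of X] unfolding ks B_def by (simp add: cmS_def cmC_def)
  qed
  show ?thesis using mgr sw by blast
qed

end
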